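(* Let $X$ be an infinite-dimensional real normed space. There exists a $1$-Lipschitz approximately convex function $f:X\to\mathbb{R}$ with the following property: for every $M>0$ there exists $R>0$ such that for every convex function $g:B_R(X)\to\mathbb{R}$, $$\sup_{x\in B_R(X)}|f(x)-g(x)|>M.$$ In particular $\sup_{x\in X}|f(x)-g(x)|=\infty$ for every convex $g:X\to\mathbb{R}$.
   Context: A function $f$ on a convex set $C$ is approximately convex if $f(tx+(1-t)y)\le tf(x)+(1-t)f(y)+1$ for all $x,y\in C$, $t\in[0,1]$. $B_R(X)=\{x\in X:\|x\|\le R\}$. *)

theory Defs
  imports "HOL-Analysis.Analysis"
begin

definition approx_convex_on :: "'a::real_vector set \<Rightarrow> ('a \<Rightarrow> real) \<Rightarrow> bool" where
  "approx_convex_on C f \<longleftrightarrow>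
     (\<forall>x\<in>C. \<forall>y\<in>C. \<forall>t::real. 0 \<le> t \<and> t \<le> 1 \<longrightarrow>
        f (t *\<^sub>R x + (1 - t) *\<^sub>R y) \<le> t * f x + (1 - t) * f y + 1)"

definition infinite_dimensional :: "'a::real_vector itself \<Rightarrow> bool" where
  "infinite_dimensional (_::'a itself) \<longleftrightarrow> \<not> (\<exists>B::'a set. finite B \<and> span B = UNIV)"

end

theory Submission
  imports Defs
begin

lemma hb_core:
  fixes \<phi> :: "'a::real_normed_vector \<Rightarrow> real"
  assumes lin: "linear \<phi>" and K: "K \<ge> 0"
    and bd: "\<forall>x\<in>span B. \<bar>\<phi> x\<bar> \<le> K * norm x"
  shows "\<exists>c. \<forall>s\<in>span B. \<forall>a. \<phi> s + a * c \<le> K * norm (s + a *\<^sub>R y)"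
proof -
  define A where "A = (\<lambda>s. \<phi> s - K * norm (s - y)) ` span B"
  have ub: "\<phi> s - K * norm (s - y) \<le> K * norm (s' + y) - \<phi> s'"
    if "s \<in> span B" "s' \<in> span B" for s s'
  proof -
    have "\<phi> s + \<phi> s' = \<phi> (s + s')" using lin by (simp add: linear_add)
    also have "\<dots> \<le> K * norm (s + s')" using bd span_add[OF that] by fastforce
    also have "norm (s + s') \<le> norm (s - y) + norm (s' + y)"
      using norm_triangle_ineq[of "s - y" "s' + y"] by simp
    hence "K * norm (s + s') \<le> K * (norm (s - y) + norm (s' + y))" using K by (simp add: mult_left_mono)
    finally show ?thesis by (simp add: algebra_simps)
  qed
  have ne: "A \<noteq> {}" unfolding A_def using span_zero by blast
  have bdd: "bdd_above A" unfolding A_def bdd_above_def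
    using ub[OF _ span_zero] by blast
  define c where "c = Sup A"
  have cge: "\<phi> s - K * norm (s - y) \<le> c" if "s \<in> span B" for s
    unfolding c_def using cSup_upper[OF _ bdd] that A_def by blast
  have cle: "c \<le> K * norm (s' + y) - \<phi> s'" if "s' \<in> span B" for s'
    unfolding c_def using ne ub[OF _ that] by (auto simp: A_def intro!: cSup_least)
  have "\<forall>s\<in>span B. \<forall>a. \<phi> s + a * c \<le> K * norm (s + a *\<^sub>R y)"
  proof (intro ballI allI)
    fix s and a :: real assume s: "s \<in> span B"
    consider "a > 0" | "a < 0" | "a = 0" by linarith
    then show "\<phi> s + a * c \<le> K * norm (s + a *\<^sub>R y)"
    proof cases
      case 1
      have s1: "(1/a) *\<^sub>R s \<in> span B" using s span_scale by blast
      have e1: "a * norm ((1/a) *\<^sub>R s + y) = norm (s + a *\<^sub>R y)"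
      proof -
        have "a * norm ((1/a) *\<^sub>R s + y) = norm (a *\<^sub>R ((1/a) *\<^sub>R s + y))" using 1 by simp
        also have "a *\<^sub>R ((1/a) *\<^sub>R s + y) = s + a *\<^sub>R y" using 1 by (simp add: algebra_simps)
        finally show ?thesis .
      qed
      have e2: "\<phi> ((1/a) *\<^sub>R s) = (1/a) * \<phi> s" using lin by (simp add: linear_cmul)
      have "c \<le> K * norm ((1/a) *\<^sub>R s + y) - \<phi> ((1/a) *\<^sub>R s)" using cle[OF s1] .
      hence "a * c \<le> a * (K * norm ((1/a) *\<^sub>R s + y) - \<phi> ((1/a) *\<^sub>R s))"
        using 1 by (simp add: mult_left_mono)
      also have "\<dots> = K * (a * norm ((1/a) *\<^sub>R s + y)) - a * \<phi> ((1/a) *\<^sub>R s)" by (simp add: algebra_simps)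
      also have "\<dots> = K * norm (s + a *\<^sub>R y) - \<phi> s" using e1 e2 1 by simp
      finally show ?thesis by simp
    next
      case 2
      have s1: "(-1/a) *\<^sub>R s \<in> span B" using s span_scale by blast
      have e1: "(-a) * norm ((-1/a) *\<^sub>R s - y) = norm (s + a *\<^sub>R y)"
      proof -
        have "(-a) * norm ((-1/a) *\<^sub>R s - y) = norm ((-a) *\<^sub>R ((-1/a) *\<^sub>R s - y))" using 2 by simp
        also have "(-a) *\<^sub>R ((-1/a) *\<^sub>R s - y) = s + a *\<^sub>R y" using 2 by (simp add: algebra_simps)
        finally show ?thesis .
      qed
      have e2: "\<phi> ((-1/a) *\<^sub>R s) = (-1/a) * \<phi> s" using linear_cmul[OF lin, of "-1/a" s] by simp
      have "\<phi> ((-1/a) *\<^sub>R s) - K * norm ((-1/a) *\<^sub>R s - y) \<le> c" using cge[OF s1] .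
      hence "(-a) * (\<phi> ((-1/a) *\<^sub>R s) - K * norm ((-1/a) *\<^sub>R s - y)) \<le> (-a) * c"
        using 2 by (simp add: mult_left_mono)
      moreover have "(-a) * (\<phi> ((-1/a) *\<^sub>R s) - K * norm ((-1/a) *\<^sub>R s - y))
          = (-a) * \<phi> ((-1/a) *\<^sub>R s) - K * ((-a) * norm ((-1/a) *\<^sub>R s - y))" by (simp add: algebra_simps)
      moreover have "(-a) * \<phi> ((-1/a) *\<^sub>R s) = \<phi> s" using e2 2 by simp
      ultimately have "\<phi> s - K * norm (s + a *\<^sub>R y) \<le> (-a) * c" using e1 by (smt (verit))
      thus ?thesis by simp
    next
      case 3
      then show ?thesis using bd s by fastforce
    qed
  qed
  then show ?thesis by blast
qed

definition good :: "(nat \<Rightarrow> 'a::real_normed_vector) \<Rightarrow> (nat \<Rightarrow> real) \<Rightarrow> nat \<Rightarrow> bool" where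
  "good u K N \<longleftrightarrow> (\<forall>j<N. K j \<ge> 0 \<and> (\<exists>\<phi>. linear \<phi> \<and> (\<forall>i<N. \<phi> (u i) = (if i = j then 1 else 0))
      \<and> (\<forall>x\<in>span (u ` {..<N}). \<bar>\<phi> x\<bar> \<le> K j * norm x)))"

lemma span_rep:
  fixes u :: "nat \<Rightarrow> 'a::real_vector"
  shows "x \<in> span (u ` {..<N}) \<Longrightarrow> \<exists>c. x = (\<Sum>i<N. c i *\<^sub>R u i)"
proof (induction N arbitrary: x)
  case 0
  then show ?case by simp
next
  case (Suc N)
  have "u ` {..<Suc N} = insert (u N) (u ` {..<N})" by (simp add: lessThan_Suc)
  with Suc.prems obtain k where "x - k *\<^sub>R u N \<in> span (u ` {..<N})"
    using span_breakdown_eq by metis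
  from Suc.IH[OF this] obtain c where c: "x - k *\<^sub>R u N = (\<Sum>i<N. c i *\<^sub>R u i)" by blast
  have "(\<Sum>i<Suc N. (c(N:=k)) i *\<^sub>R u i) = (\<Sum>i<N. c i *\<^sub>R u i) + k *\<^sub>R u N"
    by (simp add: sum.lessThan_Suc)
  also have "\<dots> = x" using c by (simp add: algebra_simps)
  finally show ?case by metis
qed

lemma sum_in_span:
  fixes u :: "nat \<Rightarrow> 'a::real_vector"
  shows "(\<Sum>i<N. c i *\<^sub>R u i) \<in> span (u ` {..<N})"
  by (intro span_sum span_scale span_base) auto

lemma biorth_coef:
  fixes u :: "nat \<Rightarrow> 'a::real_vector"
  assumes "linear \<phi>" "\<forall>i<N. \<phi> (u i) = (if i = j then 1 else 0)" "j < N"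
  shows "\<phi> (\<Sum>i<N. c i *\<^sub>R u i) = c j"
proof -
  have "\<phi> (\<Sum>i<N. c i *\<^sub>R u i) = (\<Sum>i<N. c i * \<phi> (u i))"
    using assms(1) by (simp add: linear_sum linear_cmul)
  also have "\<dots> = (\<Sum>i<N. if i = j then c i else 0)"
    using assms(2) by (intro sum.cong) auto
  also have "\<dots> = c j" using assms(3) by simp
  finally show ?thesis .
qed

lemma span_insert_shift:
  assumes "z - w \<in> span S"
  shows "span (insert z S) = span (insert w S)"
proof -
  have "(\<exists>k. x - k *\<^sub>R z \<in> span S) \<longleftrightarrow> (\<exists>k. x - k *\<^sub>R w \<in> span S)" for x
  proof
    assume "\<exists>k. x - k *\<^sub>R z \<in> span S"
    then obtain k where k: "x - k *\<^sub>R z \<in> span S" by blast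
    have "x - k *\<^sub>R w = (x - k *\<^sub>R z) + k *\<^sub>R (z - w)" by (simp add: algebra_simps)
    hence "x - k *\<^sub>R w \<in> span S" using k assms by (metis span_add span_scale)
    thus "\<exists>k. x - k *\<^sub>R w \<in> span S" by blast
  next
    assume "\<exists>k. x - k *\<^sub>R w \<in> span S"
    then obtain k where k: "x - k *\<^sub>R w \<in> span S" by blast
    have "x - k *\<^sub>R z = (x - k *\<^sub>R w) - k *\<^sub>R (z - w)" by (simp add: algebra_simps)
    hence "x - k *\<^sub>R z \<in> span S" using k assms by (metis span_diff span_scale)
    thus "\<exists>k. x - k *\<^sub>R z \<in> span S" by blast
  qed
  thus ?thesis using span_breakdown_eq by blast
qed


lemma good_step:
  fixes u :: "nat \<Rightarrow> 'a::real_normed_vector"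
  assumes inf: "\<not> (\<exists>B::'a set. finite B \<and> span B = UNIV)"
    and g: "good u K N"
  shows "\<exists>v k. good (u(N:=v)) (K(N:=k)) (Suc N)"
proof -
  define S where "S = u ` {..<N}"
  have finS: "finite S" unfolding S_def by simp
  obtain y where y: "y \<notin> span S" using inf finS by blast
  have "\<forall>j. \<exists>\<phi>. j < N \<longrightarrow> linear \<phi> \<and> (\<forall>i<N. \<phi> (u i) = (if i = j then 1 else 0))
      \<and> (\<forall>x\<in>span S. \<bar>\<phi> x\<bar> \<le> K j * norm x)"
    using g unfolding good_def S_def by blast
  from choice[OF this] obtain \<Phi> where \<Phi>0: "\<forall>j. j < N \<longrightarrow> linear (\<Phi> j) \<and> (\<forall>i<N. \<Phi> j (u i) = (if i = j then 1 else 0))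
      \<and> (\<forall>x\<in>span S. \<bar>\<Phi> j x\<bar> \<le> K j * norm x)"
    by blast
  hence \<Phi>: "\<And>j. j < N \<Longrightarrow> linear (\<Phi> j) \<and> (\<forall>i<N. \<Phi> j (u i) = (if i = j then 1 else 0))
      \<and> (\<forall>x\<in>span S. \<bar>\<Phi> j x\<bar> \<le> K j * norm x)"
    by blast
  have Kpos: "\<And>j. j < N \<Longrightarrow> K j \<ge> 0" using g unfolding good_def by blast
  obtain B0 where B0: "B0 \<subseteq> S" "independent B0" "S \<subseteq> span B0"
    using maximal_independent_subset[of S] by blast
  have spB0: "span B0 = span S"
    using B0 by (metis span_mono span_span subset_antisym)
  have indy: "independent (insert y B0)"
    using B0(2) y spB0 by (intro independent_insertI) auto
  obtain \<alpha> :: "'a \<Rightarrow> real" where \<alpha>: "linear \<alpha>" "\<forall>x\<in>insert y B0. \<alpha> x = (if x = y then 1 else 0)"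
    using linear_independent_extend[OF indy, of "\<lambda>x. if x = y then (1::real) else 0"] by blast
  have \<alpha>y: "\<alpha> y = 1" using \<alpha> by simp
  have \<alpha>S: "\<alpha> x = 0" if "x \<in> span S" for x
  proof -
    have "x \<in> span B0" using that spB0 by simp
    moreover have "\<alpha> b = 0" if b: "b \<in> B0" for b
    proof -
      have "b \<in> span S" using b spB0 span_base[of b B0] by simp
      hence "b \<noteq> y" using y by blast
      thus ?thesis using \<alpha>(2) b by simp
    qed
    ultimately show ?thesis using linear_eq_on[where f=\<alpha> and g="\<lambda>_. 0" and x=x and B=B0] \<alpha>(1) linear_zero
      by simp
  qed
  have \<alpha>u: "\<alpha> (u i) = 0" if "i < N" for i
    using \<alpha>S[of "u i"] that span_base[of "u i" S] S_def by auto
  have "\<forall>j. \<exists>c. j < N \<longrightarrow> (\<forall>s\<in>span S. \<forall>a. \<Phi> j s + a * c \<le> K j * norm (s + a *\<^sub>R y))"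
  proof
    fix j show "\<exists>c. j < N \<longrightarrow> (\<forall>s\<in>span S. \<forall>a. \<Phi> j s + a * c \<le> K j * norm (s + a *\<^sub>R y))"
    proof (cases "j < N")
      case True
      have l: "linear (\<Phi> j)" and bd: "\<forall>x\<in>span S. \<bar>\<Phi> j x\<bar> \<le> K j * norm x"
        using \<Phi>[OF True] by blast+
      obtain c where "\<forall>s\<in>span S. \<forall>a. \<Phi> j s + a * c \<le> K j * norm (s + a *\<^sub>R y)"
        using hb_core[OF l Kpos[OF True] bd] by blast
      then show ?thesis by blast
    qed simp
  qed
  from choice[OF this] obtain C where C0: "\<forall>j. j < N \<longrightarrow> (\<forall>s\<in>span S. \<forall>a. \<Phi> j s + a * C j \<le> K j * norm (s + a *\<^sub>R y))"
    by blast
  hence C: "\<And>j. j < N \<Longrightarrow> \<forall>s\<in>span S. \<forall>a. \<Phi> j s + a * C j \<le> K j * norm (s + a *\<^sub>R y)"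
    by blast
  define \<psi> where "\<psi> j x = \<Phi> j x + (C j - \<Phi> j y) * \<alpha> x" for j x
  have lin\<psi>: "linear (\<psi> j)" if "j < N" for j
  proof -
    have l: "linear (\<Phi> j)" using \<Phi>[OF that] by blast
    show ?thesis unfolding \<psi>_def linear_iff using l \<alpha>(1)
      by (simp add: linear_add linear_cmul algebra_simps)
  qed
  have \<psi>u: "\<psi> j (u i) = (if i = j then 1 else 0)" if "j < N" "i < N" for i j
    unfolding \<psi>_def using \<Phi>[OF that(1)] \<alpha>u[OF that(2)] that by simp
  have \<psi>bd: "\<bar>\<psi> j x\<bar> \<le> K j * norm x" if jN: "j < N" and xS: "x \<in> span (insert y S)" for j x
  proof -
    obtain a where a: "x - a *\<^sub>R y \<in> span S" using xS span_breakdown_eq by blast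
    define s where "s = x - a *\<^sub>R y"
    have xs: "x = s + a *\<^sub>R y" unfolding s_def by simp
    have s: "s \<in> span S" using a s_def by simp
    have lin: "linear (\<Phi> j)" using \<Phi>[OF jN] by blast
    have val: "\<psi> j x = \<Phi> j s + a * C j"
      unfolding \<psi>_def xs using \<alpha>S[OF s] \<alpha>y lin \<alpha>(1)
      by (simp add: linear_add linear_cmul algebra_simps)
    have neg: "\<psi> j (-x) = - \<psi> j x" using lin\<psi>[OF jN] by (simp add: linear_neg)
    have val2: "\<psi> j (-x) = \<Phi> j (-s) + (-a) * C j"
      using neg val lin by (simp add: linear_neg)
    have "\<psi> j x \<le> K j * norm x" using C[OF jN] s val xs by simp
    moreover have "\<psi> j (-x) \<le> K j * norm x"
    proof -
      have "-s \<in> span S" using s span_neg by blast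
      hence "\<Phi> j (-s) + (-a) * C j \<le> K j * norm (-s + (-a) *\<^sub>R y)" using C[OF jN] by blast
      also have "-s + (-a) *\<^sub>R y = - x" using xs by simp
      finally show ?thesis using val2 by simp
    qed
    ultimately show ?thesis using neg by linarith
  qed
  define v where "v = y - (\<Sum>i<N. \<psi> i y *\<^sub>R u i)"
  have vy: "v - y \<in> span S"
  proof -
    have "v - y = - (\<Sum>i<N. \<psi> i y *\<^sub>R u i)" unfolding v_def by simp
    thus ?thesis using sum_in_span[where N=N and c="\<lambda>i. \<psi> i y" and u=u] S_def span_neg by metis
  qed
  have spv: "span (insert v S) = span (insert y S)" using span_insert_shift[OF vy] .
  have \<alpha>v: "\<alpha> v = 1"
  proof -
    have "\<alpha> v = \<alpha> y - (\<Sum>i<N. \<psi> i y * \<alpha> (u i))" unfolding v_def using \<alpha>(1)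
      by (simp add: linear_diff linear_sum linear_cmul)
    thus ?thesis using \<alpha>y \<alpha>u by simp
  qed
  have bo: "\<forall>i<N. \<psi> j (u i) = (if i = j then 1 else 0)" if "j < N" for j
    using \<psi>u[OF that] by blast
  have \<psi>v: "\<psi> j v = 0" if "j < N" for j
  proof -
    have "\<psi> j v = \<psi> j y - \<psi> j (\<Sum>i<N. \<psi> i y *\<^sub>R u i)" unfolding v_def using lin\<psi>[OF that]
      by (simp add: linear_diff)
    also have "\<psi> j (\<Sum>i<N. \<psi> i y *\<^sub>R u i) = \<psi> j y"
      by (rule biorth_coef[OF lin\<psi>[OF that] bo[OF that] that])
    finally show ?thesis by simp
  qed
  have vne: "v \<noteq> 0"
  proof
    assume "v = 0"
    have "- (v - y) \<in> span S" using vy span_neg by blast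
    hence "y \<in> span S" using \<open>v = 0\<close> by simp
    thus False using y by blast
  qed
  define kN where "kN = (1 + (\<Sum>i<N. K i * norm (u i))) / norm v"
  have kNpos: "kN \<ge> 0" unfolding kN_def using Kpos by (intro divide_nonneg_nonneg add_nonneg_nonneg sum_nonneg) auto
  have \<alpha>bd: "\<bar>\<alpha> x\<bar> \<le> kN * norm x" if xV: "x \<in> span (insert v S)" for x
  proof -
    obtain a where a: "x - a *\<^sub>R v \<in> span S" using xV span_breakdown_eq by blast
    define s where "s = x - a *\<^sub>R v"
    have s: "s \<in> span S" using a s_def by simp
    have xs: "x = s + a *\<^sub>R v" unfolding s_def by simp
    have \<alpha>x: "\<alpha> x = a" unfolding xs using \<alpha>(1) \<alpha>S[OF s] \<alpha>v by (simp add: linear_add linear_cmul)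
    obtain c where c: "s = (\<Sum>i<N. c i *\<^sub>R u i)" using span_rep[of s u N] s unfolding S_def by blast
    have \<psi>x: "\<psi> i x = c i" if "i < N" for i
    proof -
      have "\<psi> i x = \<psi> i s + a * \<psi> i v" unfolding xs using lin\<psi>[OF that] by (simp add: linear_add linear_cmul)
      also have "\<psi> i s = c i" unfolding c by (rule biorth_coef[OF lin\<psi>[OF that] bo[OF that] that])
      finally show ?thesis using \<psi>v[OF that] by simp
    qed
    have xin: "x \<in> span (insert y S)" using xV spv by simp
    have "a *\<^sub>R v = x - (\<Sum>i<N. \<psi> i x *\<^sub>R u i)" using xs c \<psi>x by simp
    hence "\<bar>a\<bar> * norm v = norm (x - (\<Sum>i<N. \<psi> i x *\<^sub>R u i))" by (metis norm_scaleR)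
    also have "\<dots> \<le> norm x + norm (\<Sum>i<N. \<psi> i x *\<^sub>R u i)" by (rule norm_triangle_ineq4)
    also have "norm (\<Sum>i<N. \<psi> i x *\<^sub>R u i) \<le> (\<Sum>i<N. norm (\<psi> i x *\<^sub>R u i))" by (rule norm_sum)
    also have "\<dots> \<le> (\<Sum>i<N. K i * norm x * norm (u i))"
    proof (rule sum_mono)
      fix i assume i: "i \<in> {..<N}"
      have "\<bar>\<psi> i x\<bar> \<le> K i * norm x" using \<psi>bd[of i x] i xin by simp
      thus "norm (\<psi> i x *\<^sub>R u i) \<le> K i * norm x * norm (u i)" by (simp add: mult_right_mono)
    qed
    also have "(\<Sum>i<N. K i * norm x * norm (u i)) = norm x * (\<Sum>i<N. K i * norm (u i))"
      by (simp add: sum_distrib_left algebra_simps)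
    finally have "\<bar>a\<bar> * norm v \<le> norm x * (1 + (\<Sum>i<N. K i * norm (u i)))" by (simp add: algebra_simps)
    hence "\<bar>a\<bar> \<le> norm x * (1 + (\<Sum>i<N. K i * norm (u i))) / norm v" using vne by (simp add: field_simps)
    thus ?thesis using \<alpha>x unfolding kN_def by (simp add: mult.commute)
  qed
  define \<Psi> where "\<Psi> j = (if j < N then \<psi> j else \<alpha>)" for j
  have img: "(u(N:=v)) ` {..<Suc N} = insert v S" unfolding S_def by (auto simp: lessThan_Suc)
  have "good (u(N:=v)) (K(N:=kN)) (Suc N)"
    unfolding good_def
  proof (intro allI impI conjI)
    fix j assume j: "j < Suc N"
    show "0 \<le> (K(N := kN)) j" using Kpos kNpos j by (auto simp: less_Suc_eq)
    show "\<exists>\<phi>. linear \<phi> \<and> (\<forall>i<Suc N. \<phi> ((u(N := v)) i) = (if i = j then 1 else 0)) \<and>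
            (\<forall>x\<in>span ((u(N := v)) ` {..<Suc N}). \<bar>\<phi> x\<bar> \<le> (K(N := kN)) j * norm x)"
    proof (cases "j < N")
      case True
      show ?thesis
        using True lin\<psi>[OF True] \<psi>u[OF True] \<psi>v[OF True] \<psi>bd[OF True] img spv
        by (intro exI[of _ "\<psi> j"]) (auto simp: less_Suc_eq)
    next
      case False
      hence jN: "j = N" using j by simp
      show ?thesis
        using jN \<alpha>(1) \<alpha>u \<alpha>v \<alpha>bd img
        by (intro exI[of _ "\<alpha>"]) (auto simp: less_Suc_eq)
    qed
  qed
  thus ?thesis by blast
qed


lemma good_step':
  fixes u :: "nat \<Rightarrow> 'a::real_normed_vector"
  assumes inf: "\<not> (\<exists>B::'a set. finite B \<and> span B = UNIV)"
    and g: "good u K N"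
  shows "\<exists>p. good (u(N:=fst p)) (K(N:=snd p)) (Suc N)"
proof -
  obtain v k where "good (u(N:=v)) (K(N:=k)) (Suc N)" using good_step[OF inf g] by blast
  hence "good (u(N:=fst (v,k))) (K(N:=snd (v,k))) (Suc N)" by simp
  thus ?thesis by (rule exI)
qed

primrec seqc :: "nat \<Rightarrow> (nat \<Rightarrow> 'a::real_normed_vector) \<times> (nat \<Rightarrow> real)" where
  "seqc 0 = (\<lambda>_. 0, \<lambda>_. 0)"
| "seqc (Suc n) = (let p = (SOME p. good ((fst (seqc n))(n := fst p)) ((snd (seqc n))(n := snd p)) (Suc n))
     in ((fst (seqc n))(n := fst p), (snd (seqc n))(n := snd p)))"

lemma seqc_good:
  assumes inf: "\<not> (\<exists>B::'a::real_normed_vector set. finite B \<and> span B = UNIV)"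
  shows "good (fst (seqc n :: (nat \<Rightarrow> 'a) \<times> (nat \<Rightarrow> real))) (snd (seqc n :: (nat \<Rightarrow> 'a) \<times> (nat \<Rightarrow> real))) n"
proof (induction n)
  case 0
  then show ?case by (simp add: good_def)
next
  case (Suc n)
  let ?P = "\<lambda>p. good ((fst (seqc n :: (nat \<Rightarrow> 'a) \<times> (nat \<Rightarrow> real)))(n := fst p)) ((snd (seqc n :: (nat \<Rightarrow> 'a) \<times> (nat \<Rightarrow> real)))(n := snd p)) (Suc n)"
  have "\<exists>p. ?P p" by (rule good_step'[OF inf Suc.IH])
  hence "?P (SOME p. ?P p)" by (rule someI_ex)
  then show ?case unfolding seqc.simps(2) Let_def fst_conv snd_conv .
qed

lemma seqc_stable:
  "i < n \<Longrightarrow> fst (seqc n :: (nat \<Rightarrow> 'a::real_normed_vector) \<times> (nat \<Rightarrow> real)) i = fst (seqc (Suc i) :: (nat \<Rightarrow> 'a) \<times> (nat \<Rightarrow> real)) i \<and> snd (seqc n :: (nat \<Rightarrow> 'a) \<times> (nat \<Rightarrow> real)) i = snd (seqc (Suc i) :: (nat \<Rightarrow> 'a) \<times> (nat \<Rightarrow> real)) i"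
proof (induction n)
  case 0
  then show ?case by simp
next
  case (Suc n)
  show ?case
  proof (cases "i = n")
    case True
    then show ?thesis by simp
  next
    case False
    hence "i < n" using Suc.prems by simp
    then show ?thesis using Suc.IH False by (simp add: Let_def)
  qed
qed

lemma good_cong:
  assumes g: "good u K N" and eu: "\<forall>i<N. u i = u' i" and eK: "\<forall>i<N. K i = K' i"
  shows "good u' K' N"
proof -
  have img: "u ` {..<N} = u' ` {..<N}" using eu by (auto simp: image_def)
  show ?thesis unfolding good_def
  proof (intro allI impI)
    fix j assume j: "j < N"
    from g j obtain \<phi> where p: "K j \<ge> 0" "linear \<phi>" "\<forall>i<N. \<phi> (u i) = (if i = j then 1 else 0)"
      "\<forall>x\<in>span (u ` {..<N}). \<bar>\<phi> x\<bar> \<le> K j * norm x" unfolding good_def by blast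
    have "\<forall>i<N. \<phi> (u' i) = (if i = j then 1 else 0)" using p(3) eu by simp
    moreover have "\<forall>x\<in>span (u' ` {..<N}). \<bar>\<phi> x\<bar> \<le> K' j * norm x" using p(4) img eK j by simp
    moreover have "K' j \<ge> 0" using p(1) eK j by simp
    ultimately show "0 \<le> K' j \<and> (\<exists>\<phi>. linear \<phi> \<and> (\<forall>i<N. \<phi> (u' i) = (if i = j then 1 else 0)) \<and>
        (\<forall>x\<in>span (u' ` {..<N}). \<bar>\<phi> x\<bar> \<le> K' j * norm x))" using p(2) by blast
  qed
qed

lemma exists_biorth:
  assumes inf: "\<not> (\<exists>B::'a::real_normed_vector set. finite B \<and> span B = UNIV)"
  shows "\<exists>(u::nat \<Rightarrow> 'a) K. \<forall>N. good u K N"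
proof (intro exI allI)
  fix N
  define u :: "nat \<Rightarrow> 'a" where "u i = fst (seqc (Suc i)) i" for i
  define K where "K i = snd (seqc (Suc i) :: (nat \<Rightarrow> 'a) \<times> (nat \<Rightarrow> real)) i" for i
  show "good u K N"
  proof (rule good_cong[OF seqc_good[OF inf, of N]])
    show "\<forall>i<N. fst (seqc N :: (nat \<Rightarrow> 'a) \<times> (nat \<Rightarrow> real)) i = u i"
      unfolding u_def using seqc_stable by blast
    show "\<forall>i<N. snd (seqc N :: (nat \<Rightarrow> 'a) \<times> (nat \<Rightarrow> real)) i = K i"
      unfolding K_def using seqc_stable by blast
  qed
qed

section \<open>Entropic envelope\<close>

lemma sum_lessThan_add_split:
  fixes f :: "nat \<Rightarrow> 'b::comm_monoid_add"
  shows "(\<Sum>i<k+l. f i) = (\<Sum>i<k. f i) + (\<Sum>i<l. f (i + k))"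
  by (induction l) (simp_all add: add.commute add.left_commute)

definition ent :: "(nat \<Rightarrow> real) \<Rightarrow> nat \<Rightarrow> real" where
  "ent \<mu> k = (\<Sum>i<k. \<mu> i * log 2 (1 / \<mu> i))"

definition reps :: "('a::real_vector \<Rightarrow> real) \<Rightarrow> 'a \<Rightarrow> real set" where
  "reps h x = {ent \<mu> k + (\<Sum>i<k. \<mu> i * h (y i)) | k \<mu> y. (\<forall>i<k. \<mu> i \<ge> 0) \<and> (\<Sum>i<k. \<mu> i) = 1
       \<and> (\<Sum>i<k. \<mu> i *\<^sub>R y i) = x}"

definition envE :: "('a::real_vector \<Rightarrow> real) \<Rightarrow> 'a \<Rightarrow> real" where
  "envE h x = Inf (reps h x)"

lemma ent_term_nonneg: "0 \<le> m \<Longrightarrow> m \<le> 1 \<Longrightarrow> 0 \<le> m * log 2 (1 / m)"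
  by (cases "m = 0") auto

lemma ent_nonneg:
  assumes "\<forall>i<k. \<mu> i \<ge> 0" "(\<Sum>i<k. \<mu> i) = 1"
  shows "ent \<mu> k \<ge> 0"
  unfolding ent_def
proof (rule sum_nonneg)
  fix i assume i: "i \<in> {..<k}"
  have "\<mu> i \<le> (\<Sum>i<k. \<mu> i)" using i assms(1) by (intro member_le_sum) auto
  thus "0 \<le> \<mu> i * log 2 (1 / \<mu> i)" using assms i by (intro ent_term_nonneg) auto
qed

lemma reps_nonneg:
  assumes "\<And>z. h z \<ge> 0" "c \<in> reps h x"
  shows "c \<ge> 0"
  using assms ent_nonneg unfolding reps_def
  by (auto intro!: add_nonneg_nonneg sum_nonneg mult_nonneg_nonneg)

lemma reps_trivial: "h x \<in> reps h x"
proof -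
  have "ent (\<lambda>_. 1) (Suc 0) + (\<Sum>i<Suc 0. 1 * h ((\<lambda>_. x) i)) = h x" by (simp add: ent_def)
  moreover have "(\<forall>i<Suc 0. (\<lambda>_. 1::real) i \<ge> 0) \<and> (\<Sum>i<Suc 0. (\<lambda>_. 1::real) i) = 1
      \<and> (\<Sum>i<Suc 0. (\<lambda>_. 1::real) i *\<^sub>R (\<lambda>_. x) i) = x" by simp
  ultimately show ?thesis unfolding reps_def
    by (intro CollectI exI[of _ "Suc 0"] exI[of _ "\<lambda>_. 1::real"] exI[of _ "\<lambda>_. x"]) simp
qed

lemma reps_ne: "reps h x \<noteq> {}" using reps_trivial by blast

lemma reps_bdd: "(\<And>z. h z \<ge> 0) \<Longrightarrow> bdd_below (reps h x)"
  using reps_nonneg unfolding bdd_below_def by blast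

lemma envE_nonneg: assumes "\<And>z. h z \<ge> 0" shows "envE h x \<ge> 0"
  unfolding envE_def by (rule cInf_greatest[OF reps_ne]) (rule reps_nonneg[OF assms])

lemma envE_le: assumes "\<And>z. h z \<ge> 0" shows "envE h x \<le> h x"
  unfolding envE_def using reps_trivial reps_bdd[OF assms] by (intro cInf_lower) auto

lemma envE_lip1:
  fixes h :: "'a::real_normed_vector \<Rightarrow> real"
  assumes nn: "\<And>z. h z \<ge> 0" and lip: "\<And>a b. h a \<le> h b + dist a b"
  shows "envE h x' \<le> envE h x + dist x' x"
proof -
  have "envE h x' - dist x' x \<le> c" if c: "c \<in> reps h x" for c
  proof -
    obtain k \<mu> y where r: "c = ent \<mu> k + (\<Sum>i<k. \<mu> i * h (y i))" "\<forall>i<k. \<mu> i \<ge> 0" "(\<Sum>i<k. \<mu> i) = 1"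
      "(\<Sum>i<k. \<mu> i *\<^sub>R y i) = x" using c unfolding reps_def by blast
    define y' where "y' i = y i + (x' - x)" for i
    have "(\<Sum>i<k. \<mu> i *\<^sub>R y' i) = (\<Sum>i<k. \<mu> i *\<^sub>R y i) + (\<Sum>i<k. \<mu> i) *\<^sub>R (x' - x)"
      unfolding y'_def by (simp add: scaleR_add_right sum.distrib scaleR_sum_left)
    also have "\<dots> = x'" using r by simp
    finally have sy: "(\<Sum>i<k. \<mu> i *\<^sub>R y' i) = x'" .
    have mem: "ent \<mu> k + (\<Sum>i<k. \<mu> i * h (y' i)) \<in> reps h x'"
      unfolding reps_def using r(2,3) sy by (intro CollectI exI[of _ k] exI[of _ \<mu>] exI[of _ y']) simp
    have "(\<Sum>i<k. \<mu> i * h (y' i)) \<le> (\<Sum>i<k. \<mu> i * (h (y i) + dist x' x))"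
    proof (rule sum_mono)
      fix i assume "i \<in> {..<k}"
      hence "\<mu> i \<ge> 0" using r by simp
      moreover have "h (y' i) \<le> h (y i) + dist x' x"
      proof -
        have "dist (y' i) (y i) = dist x' x" unfolding y'_def dist_norm by simp
        thus ?thesis using lip[of "y' i" "y i"] by simp
      qed
      ultimately show "\<mu> i * h (y' i) \<le> \<mu> i * (h (y i) + dist x' x)" by (rule mult_left_mono[rotated])
    qed
    also have "\<dots> = (\<Sum>i<k. \<mu> i * h (y i)) + dist x' x"
      using r(3) by (simp add: distrib_left sum.distrib sum_distrib_right[symmetric])
    finally have "envE h x' \<le> c + dist x' x"
      unfolding envE_def using cInf_lower[OF mem reps_bdd[OF nn]] r(1) by linarith
    thus ?thesis by simp
  qed
  hence "envE h x' - dist x' x \<le> envE h x"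
    unfolding envE_def[of h x] using reps_ne by (intro cInf_greatest) auto
  thus ?thesis by simp
qed


lemma ln_half: "0 < (r::real) \<Longrightarrow> ln (1/(2 * r)) = ln (1/r) - ln 2"
  by (simp add: ln_div ln_mult)

lemma bin_ent:
  fixes t :: real
  assumes "0 < t" "t < 1"
  shows "t * log 2 (1/t) + (1-t) * log 2 (1/(1-t)) \<le> 1"
proof -
  have a: "t * ln (1/(2*t)) \<le> 1/2 - t"
  proof -
    have "ln (1/(2*t)) \<le> 1/(2*t) - 1" using assms by (intro ln_le_minus_one) simp
    hence "t * ln (1/(2*t)) \<le> t * (1/(2*t) - 1)" using assms by (simp add: mult_left_mono)
    also have "\<dots> = 1/2 - t" using assms by (simp add: field_simps)
    finally show ?thesis .
  qed
  have b: "(1-t) * ln (1/(2*(1-t))) \<le> 1/2 - (1-t)"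
  proof -
    have "ln (1/(2*(1-t))) \<le> 1/(2*(1-t)) - 1" using assms by (intro ln_le_minus_one) simp
    hence "(1-t) * ln (1/(2*(1-t))) \<le> (1-t) * (1/(2*(1-t)) - 1)" using assms by (simp add: mult_left_mono)
    also have "\<dots> = 1/2 - (1-t)" using assms by (simp add: field_simps)
    finally show ?thesis .
  qed
  have e1: "ln (1/(2*t)) = ln (1/t) - ln 2" using ln_half[of t] assms by simp
  have e2: "ln (1/(2*(1-t))) = ln (1/(1-t)) - ln 2" using ln_half[of "1-t"] assms by simp
  have "t * ln (1/t) + (1-t) * ln (1/(1-t)) \<le> ln 2"
    using a b unfolding e1 e2 by (simp add: algebra_simps)
  hence "(t * ln (1/t) + (1-t) * ln (1/(1-t))) / ln 2 \<le> 1" by simp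
  thus ?thesis unfolding log_def by (simp add: add_divide_distrib)
qed

lemma ent_term_scale:
  fixes t m :: real
  assumes "0 < t" "0 \<le> m"
  shows "(t*m) * log 2 (1/(t*m)) = (t*log 2 (1/t)) * m + t*(m*log 2 (1/m))"
proof (cases "m = 0")
  case True
  then show ?thesis by simp
next
  case False
  hence m: "m > 0" using assms by simp
  have "log 2 (1/(t*m)) = log 2 (1/t) + log 2 (1/m)" using assms m
    by (simp add: log_def ln_div ln_mult divide_simps)
  thus ?thesis by (simp add: algebra_simps)
qed

lemma ent_scale:
  assumes "0 < t" "\<forall>i<k. \<mu> i \<ge> 0" "(\<Sum>i<k. \<mu> i) = 1"
  shows "ent (\<lambda>i. t * \<mu> i) k = t * log 2 (1/t) + t * ent \<mu> k"
proof -
  have "ent (\<lambda>i. t * \<mu> i) k = (\<Sum>i<k. (t * log 2 (1/t)) * \<mu> i + t * (\<mu> i * log 2 (1/\<mu> i)))"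
    unfolding ent_def using assms(1,2) by (intro sum.cong) (auto simp: ent_term_scale)
  also have "\<dots> = (t * log 2 (1/t)) * (\<Sum>i<k. \<mu> i) + t * ent \<mu> k"
    unfolding ent_def sum.distrib sum_distrib_left by simp
  finally show ?thesis using assms(3) by simp
qed

lemma reps_comb:
  assumes c1: "c1 \<in> reps h x" and c2: "c2 \<in> reps h x'" and t: "0 < t" "t < 1"
  shows "\<exists>c\<in>reps h (t *\<^sub>R x + (1-t) *\<^sub>R x'). c \<le> t * c1 + (1-t) * c2 + 1"
proof -
  obtain k \<mu> y where r: "c1 = ent \<mu> k + (\<Sum>i<k. \<mu> i * h (y i))" "\<forall>i<k. \<mu> i \<ge> 0" "(\<Sum>i<k. \<mu> i) = 1"
      "(\<Sum>i<k. \<mu> i *\<^sub>R y i) = x" using c1 unfolding reps_def by blast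
  obtain l \<nu> w where q: "c2 = ent \<nu> l + (\<Sum>i<l. \<nu> i * h (w i))" "\<forall>i<l. \<nu> i \<ge> 0" "(\<Sum>i<l. \<nu> i) = 1"
      "(\<Sum>i<l. \<nu> i *\<^sub>R w i) = x'" using c2 unfolding reps_def by blast
  define \<rho> where "\<rho> i = (if i < k then t * \<mu> i else (1-t) * \<nu> (i - k))" for i
  define z where "z i = (if i < k then y i else w (i - k))" for i
  have split: "(\<Sum>i<k+l. f i) = (\<Sum>i<k. f i) + (\<Sum>i<l. f (i + k))" for f :: "nat \<Rightarrow> 'b::comm_monoid_add"
    by (rule sum_lessThan_add_split)
  have s1: "(\<Sum>i<k+l. \<rho> i) = 1"
    unfolding split \<rho>_def using r(3) q(3) by (simp add: sum_distrib_left[symmetric])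
  have s2: "(\<Sum>i<k+l. \<rho> i *\<^sub>R z i) = t *\<^sub>R x + (1-t) *\<^sub>R x'"
  proof -
    have a1: "t *\<^sub>R (\<Sum>i<k. \<mu> i *\<^sub>R y i) = (\<Sum>i<k. (t * \<mu> i) *\<^sub>R y i)" by (simp add: scaleR_sum_right)
    have a2: "(1-t) *\<^sub>R (\<Sum>i<l. \<nu> i *\<^sub>R w i) = (\<Sum>i<l. ((1-t) * \<nu> i) *\<^sub>R w i)" by (simp add: scaleR_sum_right)
    show ?thesis unfolding split \<rho>_def z_def using r(4) q(4) a1 a2 by simp
  qed
  have s0: "\<forall>i<k+l. \<rho> i \<ge> 0" unfolding \<rho>_def using r(2) q(2) t by auto
  have e: "ent \<rho> (k+l) = t * log 2 (1/t) + t * ent \<mu> k + ((1-t) * log 2 (1/(1-t)) + (1-t) * ent \<nu> l)"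
  proof -
    have "ent \<rho> (k+l) = ent (\<lambda>i. t * \<mu> i) k + ent (\<lambda>i. (1-t) * \<nu> i) l"
      unfolding ent_def split \<rho>_def by simp
    also have "\<dots> = t * log 2 (1/t) + t * ent \<mu> k + ((1-t) * log 2 (1/(1-t)) + (1-t) * ent \<nu> l)"
      using ent_scale[of t k \<mu>] ent_scale[of "1-t" l \<nu>] r q t by simp
    finally show ?thesis .
  qed
  have hsum: "(\<Sum>i<k+l. \<rho> i * h (z i)) = t * (\<Sum>i<k. \<mu> i * h (y i)) + (1-t) * (\<Sum>i<l. \<nu> i * h (w i))"
    unfolding split \<rho>_def z_def by (simp add: sum_distrib_left mult.assoc)
  define c where "c = ent \<rho> (k+l) + (\<Sum>i<k+l. \<rho> i * h (z i))"
  have cm: "c \<in> reps h (t *\<^sub>R x + (1-t) *\<^sub>R x')"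
    unfolding reps_def c_def using s0 s1 s2
    by (intro CollectI exI[of _ "k+l"] exI[of _ \<rho>] exI[of _ z]) simp
  have "c = t * c1 + (1-t) * c2 + (t * log 2 (1/t) + (1-t) * log 2 (1/(1-t)))"
    unfolding c_def e hsum r(1) q(1) by (simp add: algebra_simps)
  hence "c \<le> t * c1 + (1-t) * c2 + 1" using bin_ent[OF t] by simp
  thus ?thesis using cm by blast
qed

lemma inf_pass:
  fixes A B :: "real set"
  assumes "A \<noteq> {}" "B \<noteq> {}" "0 < t" "t < 1"
    and H: "\<And>a b. a \<in> A \<Longrightarrow> b \<in> B \<Longrightarrow> P \<le> t * a + (1-t) * b + 1"
  shows "P \<le> t * Inf A + (1-t) * Inf B + 1"
proof -
  have 1: "P \<le> t * Inf A + (1-t) * b + 1" if b: "b \<in> B" for b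
  proof -
    have "(P - (1-t) * b - 1) / t \<le> Inf A"
    proof (rule cInf_greatest[OF assms(1)])
      fix a assume "a \<in> A"
      hence "P - (1-t) * b - 1 \<le> t * a" using H b by fastforce
      thus "(P - (1-t) * b - 1) / t \<le> a" using assms(3) by (simp add: divide_le_eq mult.commute)
    qed
    thus ?thesis using assms(3) by (simp add: divide_le_eq algebra_simps)
  qed
  have "(P - t * Inf A - 1) / (1-t) \<le> Inf B"
  proof (rule cInf_greatest[OF assms(2)])
    fix b assume "b \<in> B"
    hence "P - t * Inf A - 1 \<le> (1-t) * b" using 1 by fastforce
    thus "(P - t * Inf A - 1) / (1-t) \<le> b" using assms(4) by (simp add: divide_le_eq mult.commute)
  qed
  thus ?thesis using assms(4) by (simp add: divide_le_eq algebra_simps)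
qed

lemma envE_approx:
  assumes nn: "\<And>z. h z \<ge> 0" and t01: "0 \<le> t" "t \<le> 1"
  shows "envE h (t *\<^sub>R x + (1-t) *\<^sub>R x') \<le> t * envE h x + (1-t) * envE h x' + 1"
proof -
  consider "t = 0" | "t = 1" | "0 < t \<and> t < 1" using t01 by linarith
  then show ?thesis
  proof cases
    case 1 then show ?thesis by simp
  next
    case 2 then show ?thesis by simp
  next
    case 3
    let ?z = "t *\<^sub>R x + (1-t) *\<^sub>R x'"
    show ?thesis unfolding envE_def
    proof (rule inf_pass[OF reps_ne reps_ne])
      show "0 < t" "t < 1" using 3 by auto
      fix a b assume a: "a \<in> reps h x" and b: "b \<in> reps h x'"
      obtain c where c: "c \<in> reps h ?z" "c \<le> t * a + (1-t) * b + 1"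
        using reps_comb[OF a b] 3 by blast
      have "Inf (reps h ?z) \<le> c" by (rule cInf_lower[OF c(1) reps_bdd[OF nn]])
      thus "Inf (reps h ?z) \<le> t * a + (1-t) * b + 1" using c(2) by linarith
    qed
  qed
qed

lemma infdist_near: "A \<noteq> {} \<Longrightarrow> 0 < e \<Longrightarrow> \<exists>a\<in>A. dist x a < infdist x A + e"
proof -
  assume A: "A \<noteq> {}" and e: "0 < e"
  have i: "infdist x A = Inf (dist x ` A)" using A by (simp add: infdist_def)
  have "Inf (dist x ` A) < infdist x A + e" using e i by simp
  from cInf_lessD[OF _ this] obtain d where "d \<in> dist x ` A" "d < infdist x A + e" using A by blast
  thus ?thesis by blast
qed

lemma four_pow_ge: "(n::nat) + 1 \<le> 4 ^ (n+1)"
proof -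
  have "n+1 < 2^(n+1)" by (rule less_exp)
  moreover have "(2::nat)^(n+1) \<le> 4^(n+1)" by (rule power_mono) auto
  ultimately have "n+1 < 4^(n+1)" by (rule less_le_trans)
  thus ?thesis by (rule less_imp_le)
qed

lemma lower_bound:
  fixes u :: "nat \<Rightarrow> 'a::real_normed_vector"
  assumes gd: "\<And>N. good u K N"
    and Rdef: "\<And>j. R j = 2 * (real j + 1)^2 * (K j + 1)"
    and hdef: "\<And>x. h x = infdist x (range (\<lambda>j. R j *\<^sub>R u j))"
    and mdef: "m = (4::nat)^(n+1)"
    and cdef: "c = (1 / real m) *\<^sub>R (\<Sum>j\<in>{m..<2*m}. R j *\<^sub>R u j)"
  shows "envE h c \<ge> real n"
  unfolding envE_def
proof (rule cInf_greatest[OF reps_ne])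
  fix C assume C: "C \<in> reps h c"
  define v where "v j = R j *\<^sub>R u j" for j
  define J where "J = {m..<2*m}"
  have Kpos: "K j \<ge> 0" for j using gd[of "Suc j"] unfolding good_def by simp
  have hnn: "h z \<ge> 0" for z using hdef infdist_nonneg by simp
  have "(1::nat) \<le> 4^(n+1)" by (rule one_le_power) simp
  hence m1: "1 \<le> m" using mdef by simp
  hence mpos: "real m \<ge> 1" by simp
  have "n + 1 \<le> m" using four_pow_ge[of n] mdef by simp
  hence mge: "real n + 1 \<le> real m" by linarith
  obtain k \<mu> y where r: "C = ent \<mu> k + (\<Sum>i<k. \<mu> i * h (y i))" "\<forall>i<k. \<mu> i \<ge> 0" "(\<Sum>i<k. \<mu> i) = 1"
      "(\<Sum>i<k. \<mu> i *\<^sub>R y i) = c" using C unfolding reps_def by blast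
  have entnn: "ent \<mu> k \<ge> 0" using ent_nonneg r(2,3) by blast
  have hsnn: "(\<Sum>i<k. \<mu> i * h (y i)) \<ge> 0" using r(2) hnn by (intro sum_nonneg mult_nonneg_nonneg) auto
  have "\<forall>i. \<exists>j. dist (y i) (v j) < h (y i) + 1/2"
  proof
    fix i
    have "range v \<noteq> {}" by simp
    from infdist_near[OF this, of "1/2" "y i"] obtain a where "a \<in> range v" "dist (y i) a < infdist (y i) (range v) + 1/2"
      by auto
    moreover have "infdist (y i) (range v) = h (y i)" using hdef v_def by simp
    ultimately show "\<exists>j. dist (y i) (v j) < h (y i) + 1/2" by auto
  qed
  from choice[OF this] obtain \<iota> where \<iota>: "\<And>i. dist (y i) (v (\<iota> i)) < h (y i) + 1/2" by blast
  define N where "N = 2*m + (\<Sum>i<k. \<iota> i) + 1"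
  have \<iota>N: "\<iota> i < N" if "i < k" for i
  proof -
    have "\<iota> i \<le> (\<Sum>i<k. \<iota> i)" using that by (intro member_le_sum) auto
    thus ?thesis unfolding N_def by simp
  qed
  have JN: "j < N" if "j \<in> J" for j using that unfolding J_def N_def by simp
  define x where "x = c - (\<Sum>i<k. \<mu> i *\<^sub>R v (\<iota> i))"
  have xspan: "x \<in> span (u ` {..<N})"
  proof -
    have "c \<in> span (u ` {..<N})"
      unfolding cdef using JN unfolding J_def
      by (intro span_scale span_sum) (auto intro!: span_base)
    moreover have "(\<Sum>i<k. \<mu> i *\<^sub>R v (\<iota> i)) \<in> span (u ` {..<N})"
      unfolding v_def using \<iota>N by (intro span_sum span_scale) (auto intro!: span_base)
    ultimately show ?thesis unfolding x_def by (rule span_diff)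
  qed
  have xnorm: "norm x \<le> C + 1/2"
  proof -
    have "x = (\<Sum>i<k. \<mu> i *\<^sub>R (y i - v (\<iota> i)))"
      unfolding x_def r(4)[symmetric] by (simp add: scaleR_diff_right sum_subtractf)
    hence "norm x \<le> (\<Sum>i<k. norm (\<mu> i *\<^sub>R (y i - v (\<iota> i))))" using norm_sum by metis
    also have "\<dots> \<le> (\<Sum>i<k. \<mu> i * (h (y i) + 1/2))"
    proof (rule sum_mono)
      fix i assume i: "i \<in> {..<k}"
      have "norm (y i - v (\<iota> i)) \<le> h (y i) + 1/2" using \<iota>[of i] by (simp add: dist_norm)
      thus "norm (\<mu> i *\<^sub>R (y i - v (\<iota> i))) \<le> \<mu> i * (h (y i) + 1/2)"
        using r(2) i by (simp add: mult_left_mono)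
    qed
    also have "\<dots> = (\<Sum>i<k. \<mu> i * h (y i)) + (\<Sum>i<k. \<mu> i) / 2"
      by (simp add: distrib_left sum.distrib sum_divide_distrib)
    also have "\<dots> = (\<Sum>i<k. \<mu> i * h (y i)) + 1/2" using r(3) by simp
    finally show ?thesis using r(1) entnn by linarith
  qed
  define \<nu> where "\<nu> j = (\<Sum>i<k. if \<iota> i = j then \<mu> i else 0)" for j
  have key: "R j * \<bar>1 / real m - \<nu> j\<bar> \<le> K j * (C + 1/2)" if jJ: "j \<in> J" for j
  proof -
    from gd[of N] JN[OF jJ] obtain \<phi> where \<phi>: "linear \<phi>" "\<forall>i<N. \<phi> (u i) = (if i = j then 1 else 0)"
      "\<forall>x\<in>span (u ` {..<N}). \<bar>\<phi> x\<bar> \<le> K j * norm x" unfolding good_def by blast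
    have p1: "\<phi> c = R j / real m"
    proof -
      have "\<phi> c = (1 / real m) * (\<Sum>j'\<in>J. R j' * \<phi> (u j'))"
        unfolding cdef J_def using \<phi>(1) by (simp add: linear_sum linear_cmul sum_divide_distrib)
      also have "(\<Sum>j'\<in>J. R j' * \<phi> (u j')) = (\<Sum>j'\<in>J. if j' = j then R j else 0)"
        using \<phi>(2) JN by (intro sum.cong) auto
      also have "\<dots> = R j" using jJ unfolding J_def by simp
      finally show ?thesis by simp
    qed
    have p2: "\<phi> (\<Sum>i<k. \<mu> i *\<^sub>R v (\<iota> i)) = R j * \<nu> j"
    proof -
      have "\<phi> (\<Sum>i<k. \<mu> i *\<^sub>R v (\<iota> i)) = (\<Sum>i<k. \<mu> i * (R (\<iota> i) * \<phi> (u (\<iota> i))))"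
        unfolding v_def using \<phi>(1) by (simp add: linear_sum linear_cmul mult.assoc)
      also have "\<dots> = (\<Sum>i<k. R j * (if \<iota> i = j then \<mu> i else 0))"
        using \<phi>(2) \<iota>N by (intro sum.cong) auto
      also have "\<dots> = R j * \<nu> j" unfolding \<nu>_def by (simp add: sum_distrib_left)
      finally show ?thesis .
    qed
    have "\<phi> x = R j * (1 / real m - \<nu> j)" unfolding x_def using \<phi>(1) p1 p2
      by (simp add: linear_diff algebra_simps)
    hence "R j * \<bar>1 / real m - \<nu> j\<bar> = \<bar>\<phi> x\<bar>"
      using Rdef[of j] Kpos[of j] by (simp add: abs_mult)
    also have "\<dots> \<le> K j * norm x" using \<phi>(3) xspan by blast
    also have "\<dots> \<le> K j * (C + 1/2)" using xnorm Kpos[of j] by (simp add: mult_left_mono)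
    finally show ?thesis .
  qed
  show "real n \<le> C"
  proof (cases "\<exists>j\<in>J. \<bar>1 / real m - \<nu> j\<bar> \<ge> 1 / (2 * real m)")
    case True
    then obtain j where jJ: "j \<in> J" and big: "\<bar>1 / real m - \<nu> j\<bar> \<ge> 1 / (2 * real m)" by blast
    have jm: "real m \<le> real j" using jJ unfolding J_def by simp
    have Rj: "R j / (2 * real m) \<ge> (real n + 1) * (K j + 1)"
    proof -
      have "(real j + 1)^2 \<ge> real m * (real n + 1)"
      proof -
        have "(real j + 1)^2 = (real j + 1) * (real j + 1)" by (simp add: power2_eq_square)
        also have "\<dots> \<ge> real m * (real n + 1)"
          using jm mge mpos by (intro mult_mono) auto
        finally show ?thesis .
      qed
      hence "(real j + 1)^2 / real m \<ge> real n + 1" using mpos by (simp add: field_simps)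
      hence "(real j + 1)^2 / real m * (K j + 1) \<ge> (real n + 1) * (K j + 1)"
        using Kpos[of j] by (intro mult_right_mono) auto
      moreover have "R j / (2 * real m) = (real j + 1)^2 / real m * (K j + 1)"
        using Rdef[of j] mpos by (simp add: field_simps)
      ultimately show ?thesis by simp
    qed
    have "R j / (2 * real m) \<le> R j * \<bar>1 / real m - \<nu> j\<bar>"
    proof -
      have "R j \<ge> 0" using Rdef[of j] Kpos[of j] by simp
      hence "R j * (1 / (2 * real m)) \<le> R j * \<bar>1 / real m - \<nu> j\<bar>" using mult_left_mono[OF big] by blast
      thus ?thesis by simp
    qed
    with key[OF jJ] Rj have "(real n + 1) * (K j + 1) \<le> K j * (C + 1/2)" by linarith
    also have "\<dots> \<le> (K j + 1) * (C + 1/2)"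
      using entnn hsnn r(1) by (intro mult_right_mono) auto
    finally have "(K j + 1) * (real n + 1) \<le> (K j + 1) * (C + 1/2)" by (simp add: mult.commute)
    hence "real n + 1 \<le> C + 1/2" using Kpos[of j] by (simp add: mult_le_cancel_left_pos)
    thus ?thesis by simp
  next
    case False
    hence close: "\<And>j. j \<in> J \<Longrightarrow> \<bar>1 / real m - \<nu> j\<bar> < 1 / (2 * real m)" by (auto simp: not_le)
    have mnu: "1/2 < real m * \<nu> j \<and> real m * \<nu> j < 3/2" if "j \<in> J" for j
    proof -
      have mp: "real m > 0" using mpos by simp
      have "real m * \<bar>1 / real m - \<nu> j\<bar> < real m * (1 / (2 * real m))"
        using close[OF that] mp by (rule mult_strict_left_mono)
      moreover have "real m * \<bar>1 / real m - \<nu> j\<bar> = \<bar>1 - real m * \<nu> j\<bar>"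
      proof -
        have e: "real m * (1 / real m - \<nu> j) = 1 - real m * \<nu> j" using mp by (simp add: right_diff_distrib)
        have "real m * \<bar>1 / real m - \<nu> j\<bar> = \<bar>real m * (1 / real m - \<nu> j)\<bar>" using mp by (simp add: abs_mult)
        thus ?thesis using e by simp
      qed
      moreover have "real m * (1 / (2 * real m)) = 1/2" using mp by simp
      ultimately have "\<bar>1 - real m * \<nu> j\<bar> < 1/2" by simp
      thus ?thesis using abs_less_iff[of "1 - real m * \<nu> j" "1/2"] by linarith
    qed
    have \<nu>lo: "\<nu> j \<ge> 1 / (2 * real m)" if "j \<in> J" for j
    proof -
      have mp: "real m > 0" using mpos by simp
      have "(1/2) / real m \<le> (real m * \<nu> j) / real m"
        using mnu[OF that] mp by (intro divide_right_mono) auto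
      thus ?thesis using mp by simp
    qed
    have \<nu>hi: "\<nu> j < 3 / (2 * real m)" if "j \<in> J" for j
    proof -
      have mp: "real m > 0" using mpos by simp
      have "(real m * \<nu> j) / real m < (3/2) / real m"
        using mnu[OF that] mp by (intro divide_strict_right_mono) auto
      thus ?thesis using mp by simp
    qed
    have \<mu>le: "\<mu> i \<le> \<nu> (\<iota> i)" if "i < k" for i
    proof -
      have "(if \<iota> i = \<iota> i then \<mu> i else 0) \<le> (\<Sum>i'<k. if \<iota> i' = \<iota> i then \<mu> i' else 0)"
        using that r(2) by (intro member_le_sum) auto
      thus ?thesis unfolding \<nu>_def by simp
    qed
    have tbound: "\<mu> i * log 2 (1 / \<mu> i) \<ge> (if \<iota> i \<in> J then \<mu> i * (2 * real n + 1) else 0)" if i: "i < k" for i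
    proof (cases "\<iota> i \<in> J")
      case True
      show ?thesis
      proof (cases "\<mu> i = 0")
        case True then show ?thesis by simp
      next
        case False
        hence mp: "\<mu> i > 0" using r(2) i by (simp add: less_le)
        have "\<mu> i < 3 / (2 * real m)" using \<mu>le[OF i] \<nu>hi[OF True] by linarith
        hence "1 / \<mu> i > 2 * real m / 3" using mp mpos by (simp add: field_simps)
        moreover have "2 * real m / 3 \<ge> 2 ^ (2*n+1)"
        proof -
          have "real m = 4^(n+1)" using mdef by simp
          also have "(4::real)^(n+1) = (2^2)^(n+1)" by simp
          also have "\<dots> = 2^(2*(n+1))" by (simp only: power_mult)
          also have "2*(n+1) = Suc (2*n+1)" by simp
          also have "(2::real)^(Suc (2*n+1)) = 2 * 2^(2*n+1)" by (simp only: power_Suc)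
          finally have "real m = 2 * 2^(2*n+1)" .
          thus ?thesis by simp
        qed
        ultimately have ge: "1 / \<mu> i \<ge> 2 ^ (2*n+1)" by linarith
        have "log 2 (1 / \<mu> i) \<ge> log 2 (2 ^ (2*n+1))"
          using ge mp by (subst log_le_cancel_iff) auto
        moreover have "log 2 ((2::real) ^ (2*n+1)) = real (2*n+1)" by (rule log_pow_cancel) auto
        ultimately have "log 2 (1 / \<mu> i) \<ge> 2 * real n + 1" by simp
        hence "\<mu> i * log 2 (1 / \<mu> i) \<ge> \<mu> i * (2 * real n + 1)" using mp by (simp add: mult_left_mono)
        thus ?thesis using True by simp
      qed
    next
      case False
      have "\<mu> i \<le> 1" using r(2,3) i member_le_sum[of i "{..<k}" \<mu>] by auto
      hence "0 \<le> \<mu> i * log 2 (1 / \<mu> i)" using r(2) i by (intro ent_term_nonneg) auto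
      then show ?thesis using False by simp
    qed
    have "ent \<mu> k \<ge> (\<Sum>i<k. if \<iota> i \<in> J then \<mu> i * (2 * real n + 1) else 0)"
      unfolding ent_def using tbound by (intro sum_mono) auto
    also have "(\<Sum>i<k. if \<iota> i \<in> J then \<mu> i * (2 * real n + 1) else 0)
        = (2 * real n + 1) * (\<Sum>i<k. if \<iota> i \<in> J then \<mu> i else 0)"
      unfolding sum_distrib_left by (intro sum.cong) auto
    also have "(\<Sum>i<k. if \<iota> i \<in> J then \<mu> i else 0) = (\<Sum>j\<in>J. \<nu> j)"
    proof -
      have "(\<Sum>j\<in>J. \<nu> j) = (\<Sum>i<k. \<Sum>j\<in>J. if \<iota> i = j then \<mu> i else 0)"
        unfolding \<nu>_def by (rule sum.swap)
      also have "\<dots> = (\<Sum>i<k. if \<iota> i \<in> J then \<mu> i else 0)"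
        unfolding J_def by (intro sum.cong) auto
      finally show ?thesis by simp
    qed
    finally have A: "ent \<mu> k \<ge> (2 * real n + 1) * (\<Sum>j\<in>J. \<nu> j)" .
    have "(\<Sum>j\<in>J. \<nu> j) \<ge> (\<Sum>j\<in>J. 1 / (2 * real m))" using \<nu>lo by (intro sum_mono) auto
    moreover have "(\<Sum>j\<in>J. 1 / (2 * real m)) = 1/2"
    proof -
      have "card J = m" unfolding J_def by simp
      thus ?thesis using mpos by simp
    qed
    ultimately have B: "(\<Sum>j\<in>J. \<nu> j) \<ge> 1/2" by simp
    have "(2 * real n + 1) * (1/2) \<le> (2 * real n + 1) * (\<Sum>j\<in>J. \<nu> j)"
      using B by (intro mult_left_mono) auto
    with A have "ent \<mu> k \<ge> (2 * real n + 1) * (1/2)" by linarith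
    hence "ent \<mu> k \<ge> real n" by simp
    thus ?thesis using r(1) hsnn by linarith
  qed
qed


lemma main_construction:
  fixes u :: "nat \<Rightarrow> 'a::real_normed_vector"
  assumes gd: "\<And>N. good u K N"
    and Rdef: "\<And>j. R j = 2 * (real j + 1)^2 * (K j + 1)"
    and hdef: "\<And>x. h x = infdist x (range (\<lambda>j. R j *\<^sub>R u j))"
  shows "1-lipschitz_on UNIV (envE h) \<and> (\<forall>t x y. 0 \<le> t \<and> t \<le> 1 \<longrightarrow>
        envE h (t *\<^sub>R x + (1 - t) *\<^sub>R y) \<le> t * envE h x + (1 - t) * envE h y + 1) \<and>
     (\<forall>M>0. \<exists>Rad>0. \<forall>g :: 'a \<Rightarrow> real. convex_on (cball 0 Rad) g \<longrightarrow>
        (SUP x\<in>cball 0 Rad. ereal \<bar>envE h x - g x\<bar>) > ereal M)"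
proof (intro conjI)
  define f where "f = envE h"
  have hnn: "\<And>z. h z \<ge> 0" using hdef infdist_nonneg by simp
  have hlip: "\<And>a b. h a \<le> h b + dist a b" using hdef infdist_triangle by simp
  show "1-lipschitz_on UNIV (envE h)"
    unfolding lipschitz_on_def
  proof (intro conjI ballI)
    fix x y :: 'a
    have "envE h x \<le> envE h y + dist x y" by (rule envE_lip1[OF hnn hlip])
    moreover have "envE h y \<le> envE h x + dist y x" by (rule envE_lip1[OF hnn hlip])
    ultimately show "dist (envE h x) (envE h y) \<le> 1 * dist x y"
      by (simp add: dist_real_def dist_commute abs_le_iff)
  qed simp
  show "\<forall>t x y. 0 \<le> t \<and> t \<le> 1 \<longrightarrow>
        envE h (t *\<^sub>R x + (1 - t) *\<^sub>R y) \<le> t * envE h x + (1 - t) * envE h y + 1"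
    using envE_approx[where h=h, OF hnn] by blast
  show "\<forall>M>0. \<exists>Rad>0. \<forall>g :: 'a \<Rightarrow> real. convex_on (cball 0 Rad) g \<longrightarrow>
        (SUP x\<in>cball 0 Rad. ereal \<bar>envE h x - g x\<bar>) > ereal M"
  proof (intro allI impI)
    fix M :: real assume M: "M > 0"
    define n where "n = nat \<lceil>2 * M\<rceil> + 1"
    have nM: "real n > 2 * M" unfolding n_def by linarith
    define m where "m = (4::nat)^(n+1)"
    define J where "J = {m..<2*m}"
    define v where "v j = R j *\<^sub>R u j" for j
    define c where "c = (1 / real m) *\<^sub>R (\<Sum>j\<in>{m..<2*m}. R j *\<^sub>R u j)"
    have low: "envE h c \<ge> real n" by (rule lower_bound[OF gd Rdef hdef m_def c_def])
    have "(1::nat) \<le> 4^(n+1)" by (rule one_le_power) simp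
    hence m1: "1 \<le> m" using m_def by simp
    hence mpos: "real m > 0" by simp
    have cardJ: "card J = m" unfolding J_def by simp
    have finJ: "finite J" "J \<noteq> {}" unfolding J_def using m1 by auto
    have vert: "envE h (v j) = 0" for j
    proof -
      have "h (v j) = 0" using hdef v_def by simp
      thus ?thesis using envE_le[where h=h and x="v j", OF hnn] envE_nonneg[where h=h and x="v j", OF hnn] by simp
    qed
    define Rad where "Rad = (\<Sum>j\<in>J. norm (v j)) + 1"
    have S0: "(\<Sum>j\<in>J. norm (v j)) \<ge> 0" by (intro sum_nonneg) auto
    have Radpos: "Rad > 0" unfolding Rad_def using S0 by simp
    have vin: "v j \<in> cball 0 Rad" if "j \<in> J" for j
    proof -
      have "norm (v j) \<le> (\<Sum>j\<in>J. norm (v j))" using that finJ by (intro member_le_sum) auto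
      thus ?thesis unfolding Rad_def by simp
    qed
    have csum: "c = (\<Sum>j\<in>J. (1 / real m) *\<^sub>R v j)" unfolding c_def J_def v_def by (simp add: scaleR_sum_right)
    have cin: "c \<in> cball 0 Rad"
    proof -
      have "norm c \<le> (\<Sum>j\<in>J. norm ((1 / real m) *\<^sub>R v j))" unfolding csum by (rule norm_sum)
      also have "\<dots> = (1 / real m) * (\<Sum>j\<in>J. norm (v j))" using mpos by (simp add: sum_distrib_left)
      also have "\<dots> \<le> 1 * (\<Sum>j\<in>J. norm (v j))" using mpos m1 S0 by (intro mult_right_mono) auto
      finally show ?thesis unfolding Rad_def by simp
    qed
    show "\<exists>Rad>0. \<forall>g :: 'a \<Rightarrow> real. convex_on (cball 0 Rad) g \<longrightarrow>
        (SUP x\<in>cball 0 Rad. ereal \<bar>envE h x - g x\<bar>) > ereal M"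
    proof (intro exI[of _ Rad] conjI allI impI)
      show "Rad > 0" by (rule Radpos)
      fix g :: "'a \<Rightarrow> real" assume g: "convex_on (cball 0 Rad) g"
      show "(SUP x\<in>cball 0 Rad. ereal \<bar>envE h x - g x\<bar>) > ereal M"
      proof (rule ccontr)
        assume "\<not> ?thesis"
        hence "(SUP x\<in>cball 0 Rad. ereal \<bar>envE h x - g x\<bar>) \<le> ereal M" by (simp add: not_less)
        hence bd: "\<bar>envE h x - g x\<bar> \<le> M" if "x \<in> cball 0 Rad" for x
          using that by (simp add: SUP_le_iff)
        have jen: "g (\<Sum>j\<in>J. (1 / real m) *\<^sub>R v j) \<le> (\<Sum>j\<in>J. (1 / real m) * g (v j))"
        proof (rule convex_on_sum[OF finJ g])
          show "(\<Sum>j\<in>J. 1 / real m) = 1" using cardJ mpos by simp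
          show "\<And>i. i \<in> J \<Longrightarrow> 0 \<le> 1 / real m" using mpos by simp
          show "\<And>i. i \<in> J \<Longrightarrow> v i \<in> cball 0 Rad" by (rule vin)
        qed
        have "(\<Sum>j\<in>J. (1 / real m) * g (v j)) \<le> (\<Sum>j\<in>J. (1 / real m) * M)"
        proof (rule sum_mono)
          fix j assume j: "j \<in> J"
          have "g (v j) \<le> M" using bd[OF vin[OF j]] vert[of j] by simp
          thus "(1 / real m) * g (v j) \<le> (1 / real m) * M" using mpos by (intro mult_left_mono) auto
        qed
        also have "\<dots> = M" using cardJ mpos by simp
        finally have "g c \<le> M" using jen csum by simp
        moreover have "g c \<ge> envE h c - M" using bd[OF cin] by simp
        ultimately show False using low nM M by linarith
      qed
    qed
  qed
qed

theorem corollary3p4: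
  assumes "infinite_dimensional TYPE('a::real_normed_vector)"
  shows "\<exists>f :: 'a \<Rightarrow> real.
     1-lipschitz_on UNIV f \<and> approx_convex_on UNIV f \<and>
     (\<forall>M>0. \<exists>R>0. \<forall>g :: 'a \<Rightarrow> real. convex_on (cball 0 R) g \<longrightarrow>
        (SUP x\<in>cball 0 R. ereal \<bar>f x - g x\<bar>) > ereal M) \<and>
     (\<forall>g :: 'a \<Rightarrow> real. convex_on UNIV g \<longrightarrow>
        (SUP x\<in>UNIV. ereal \<bar>f x - g x\<bar>) = \<infinity>)"
proof -
  have inf: "\<not> (\<exists>B::'a set. finite B \<and> span B = UNIV)"
    using assms unfolding infinite_dimensional_def by simp
  obtain u :: "nat \<Rightarrow> 'a" and K where gd: "\<forall>N. good u K N" using exists_biorth[OF inf] by blast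
  define R where "R j = 2 * (real j + 1)^2 * (K j + 1)" for j
  define h where "h x = infdist x (range (\<lambda>j. R j *\<^sub>R u j))" for x
  have mc: "1-lipschitz_on UNIV (envE h) \<and> (\<forall>t x y. 0 \<le> t \<and> t \<le> 1 \<longrightarrow>
        envE h (t *\<^sub>R x + (1 - t) *\<^sub>R y) \<le> t * envE h x + (1 - t) * envE h y + 1) \<and>
     (\<forall>M>0. \<exists>Rad>0. \<forall>g :: 'a \<Rightarrow> real. convex_on (cball 0 Rad) g \<longrightarrow>
        (SUP x\<in>cball 0 Rad. ereal \<bar>envE h x - g x\<bar>) > ereal M)"
    by (rule main_construction) (use gd R_def h_def in auto)
  define f where "f = envE h"
  have P3: "\<forall>M>0. \<exists>R>0. \<forall>g :: 'a \<Rightarrow> real. convex_on (cball 0 R) g \<longrightarrow>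
        (SUP x\<in>cball 0 R. ereal \<bar>f x - g x\<bar>) > ereal M" using mc unfolding f_def by blast
  have P4: "(SUP x\<in>UNIV. ereal \<bar>f x - g x\<bar>) = \<infinity>" if g: "convex_on UNIV g" for g :: "'a \<Rightarrow> real"
  proof (rule ccontr)
    assume ne: "(SUP x\<in>UNIV. ereal \<bar>f x - g x\<bar>) \<noteq> \<infinity>"
    have ge0: "(SUP x\<in>UNIV. ereal \<bar>f x - g x\<bar>) \<ge> ereal \<bar>f 0 - g 0\<bar>" by (rule SUP_upper) simp
    have "(SUP x\<in>UNIV. ereal \<bar>f x - g x\<bar>) \<noteq> -\<infinity>" using ge0 by auto
    with ne obtain B where B: "(SUP x\<in>UNIV. ereal \<bar>f x - g x\<bar>) = ereal B" by (cases "(SUP x\<in>UNIV. ereal \<bar>f x - g x\<bar>)") auto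
    define M where "M = max B 1"
    have "M > 0" unfolding M_def by simp
    then obtain Rr where Rr: "Rr > 0" "\<forall>g :: 'a \<Rightarrow> real. convex_on (cball 0 Rr) g \<longrightarrow>
        (SUP x\<in>cball 0 Rr. ereal \<bar>f x - g x\<bar>) > ereal M" using P3 by blast
    have "convex_on (cball 0 Rr) g" using g by (rule convex_on_subset) auto
    hence "(SUP x\<in>cball 0 Rr. ereal \<bar>f x - g x\<bar>) > ereal M" using Rr by blast
    moreover have "(SUP x\<in>cball 0 Rr. ereal \<bar>f x - g x\<bar>) \<le> (SUP x\<in>UNIV. ereal \<bar>f x - g x\<bar>)"
      by (rule SUP_subset_mono) auto
    ultimately have "ereal M < (SUP x\<in>UNIV. ereal \<bar>f x - g x\<bar>)" by (rule less_le_trans)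
    hence "ereal M < ereal B" using B by simp
    thus False unfolding M_def by simp
  qed
  show ?thesis
  proof (intro exI[of _ f] conjI)
    show "1-lipschitz_on UNIV f" using mc unfolding f_def by blast
    show "approx_convex_on UNIV f" unfolding approx_convex_on_def f_def using mc by blast
    show "\<forall>M>0. \<exists>R>0. \<forall>g :: 'a \<Rightarrow> real. convex_on (cball 0 R) g \<longrightarrow>
        (SUP x\<in>cball 0 R. ereal \<bar>f x - g x\<bar>) > ereal M" by (rule P3)
    show "\<forall>g :: 'a \<Rightarrow> real. convex_on UNIV g \<longrightarrow> (SUP x\<in>UNIV. ereal \<bar>f x - g x\<bar>) = \<infinity>"
      using P4 by blast
  qed
qed

end
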